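(* Let $\mathbb{F}$ be an algebraically closed field with $\mathrm{char}\,\mathbb{F}=2$ and $n\ge1$. Then the algebra $T_n$ of trace ${\rm G}_2$-invariants is generated by $S_n$, and no proper subset of $S_n$ generates $T_n$.
   Context: The split octonion algebra $\mathbf{O}$ is the 8-dimensional $\mathbb{F}$-vector space of formal matrices $a=\begin{pmatrix}\alpha&\mathbf{u}\\ \mathbf{v}&\beta\end{pmatrix}$ with $\alpha,\beta\in\mathbb{F}$, $\mathbf{u},\mathbf{v}\in\mathbb{F}^3$, with multiplication $\begin{pmatrix}\alpha&\mathbf{u}\\ \mathbf{v}&\beta\end{pmatrix}\begin{pmatrix}\alpha'&\mathbf{u}'\\ \mathbf{v}'&\beta'\end{pmatrix}=\begin{pmatrix}\alpha\alpha'+\mathbf{u}\cdot\mathbf{v}'&\alpha\mathbf{u}'+\beta'\mathbf{u}-\mathbf{v}\times\mathbf{v}'\\ \alpha'\mathbf{v}+\beta\mathbf{v}'+\mathbf{u}\times\mathbf{u}'&\beta\beta'+\mathbf{v}\cdot\mathbf{u}'\end{pmatrix}$ (dot product and cross product on $\mathbb{F}^3$). Trace $\mathrm{tr}(a)=\alpha+\beta$, norm $n(a)=\alpha\beta-\mathbf{u}\cdot\mathbf{v}$. ${\rm G}_2=\mathrm{Aut}(\mathbf{O})$. $T_n$ is the subalgebra of the polynomial ring $\mathbb{F}[\mathbf{O}^n]$ generated by the functions $\underline{a}\mapsto n(a_i)$ ($1\le i\le n$) and $\underline{a}\mapsto\mathrm{tr}(w(a_1,\ldots,a_n))$ for all non-empty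 non-associative words $w$ in $n$ letters. $S_n$ is the set consisting of $\underline{a}\mapsto n(a_i)$ ($1\le i\le n$) and $\underline{a}\mapsto\mathrm{tr}((\cdots((a_{i_1}a_{i_2})a_{i_3})\cdots)a_{i_k})$ for all $k\ge 1$ and $1\le i_1<\cdots<i_k\le n$. *)

theory Defs
  imports "HOL-Computational_Algebra.Polynomial"
begin

datatype 'a vec3 = V3 'a 'a 'a

fun vadd :: "'a::field vec3 \<Rightarrow> 'a vec3 \<Rightarrow> 'a vec3" where
  "vadd (V3 x1 x2 x3) (V3 y1 y2 y3) = V3 (x1 + y1) (x2 + y2) (x3 + y3)"

fun vsub :: "'a::field vec3 \<Rightarrow> 'a vec3 \<Rightarrow> 'a vec3" where
  "vsub (V3 x1 x2 x3) (V3 y1 y2 y3) = V3 (x1 - y1) (x2 - y2) (x3 - y3)"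

fun vscale :: "'a::field \<Rightarrow> 'a vec3 \<Rightarrow> 'a vec3" where
  "vscale c (V3 x1 x2 x3) = V3 (c * x1) (c * x2) (c * x3)"

fun vdot :: "'a::field vec3 \<Rightarrow> 'a vec3 \<Rightarrow> 'a" where
  "vdot (V3 x1 x2 x3) (V3 y1 y2 y3) = x1 * y1 + x2 * y2 + x3 * y3"

fun vcross :: "'a::field vec3 \<Rightarrow> 'a vec3 \<Rightarrow> 'a vec3" where
  "vcross (V3 x1 x2 x3) (V3 y1 y2 y3) =
     V3 (x2 * y3 - x3 * y2) (x3 * y1 - x1 * y3) (x1 * y2 - x2 * y1)"

section \<open>Split octonions (Zorn vector matrices)\<close>

text \<open>Oct alpha u v beta stands for the formal matrix with rows (alpha, u) and (v, beta).\<close>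

datatype 'a oct = Oct 'a "'a vec3" "'a vec3" 'a

fun omult :: "'a::field oct \<Rightarrow> 'a oct \<Rightarrow> 'a oct" where
  "omult (Oct al u v be) (Oct al' u' v' be') =
     Oct (al * al' + vdot u v')
         (vsub (vadd (vscale al u') (vscale be' u)) (vcross v v'))
         (vadd (vadd (vscale al' v) (vscale be v')) (vcross u u'))
         (be * be' + vdot v u')"

fun otr :: "'a::field oct \<Rightarrow> 'a" where
  "otr (Oct al u v be) = al + be"

fun onorm :: "'a::field oct \<Rightarrow> 'a" where
  "onorm (Oct al u v be) = al * be - vdot u v"

datatype nword = Letter nat | Mul nword nword

fun letters :: "nword \<Rightarrow> nat set" where
  "letters (Letter i) = {i}"
| "letters (Mul w1 w2) = letters w1 \<union> letters w2"

fun weval :: "nword \<Rightarrow> (nat \<Rightarrow> 'a::field oct) \<Rightarrow> 'a oct" where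
  "weval (Letter i) a = a i"
| "weval (Mul w1 w2) a = omult (weval w1 a) (weval w2 a)"

inductive_set gen_alg :: "('b \<Rightarrow> 'a::field) set \<Rightarrow> ('b \<Rightarrow> 'a) set" for G where
  const: "(\<lambda>_. c) \<in> gen_alg G"
| gen: "g \<in> G \<Longrightarrow> g \<in> gen_alg G"
| add: "f \<in> gen_alg G \<Longrightarrow> g \<in> gen_alg G \<Longrightarrow> (\<lambda>x. f x + g x) \<in> gen_alg G"
| mult: "f \<in> gen_alg G \<Longrightarrow> g \<in> gen_alg G \<Longrightarrow> (\<lambda>x. f x * g x) \<in> gen_alg G"

definition norm_funs :: "nat \<Rightarrow> ((nat \<Rightarrow> 'a::field oct) \<Rightarrow> 'a) set" where
  "norm_funs n = {(\<lambda>a. onorm (a i)) | i. 1 \<le> i \<and> i \<le> n}"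

definition T_alg :: "nat \<Rightarrow> ((nat \<Rightarrow> 'a::field oct) \<Rightarrow> 'a) set" where
  "T_alg n = gen_alg (norm_funs n \<union>
      {(\<lambda>a. otr (weval w a)) | w. letters w \<subseteq> {1..n}})"

definition left_prod :: "nat list \<Rightarrow> (nat \<Rightarrow> 'a::field oct) \<Rightarrow> 'a oct" where
  "left_prod is a = foldl omult (a (hd is)) (map a (tl is))"

definition S_set :: "nat \<Rightarrow> ((nat \<Rightarrow> 'a::field oct) \<Rightarrow> 'a) set" where
  "S_set n = norm_funs n \<union>
      {(\<lambda>a. otr (left_prod is a)) | is. is \<noteq> [] \<and> sorted_wrt (<) is \<and> set is \<subseteq> {1..n}}"

end

theory Submission
  imports Defs
begin

fun oadd :: "'a::field oct \<Rightarrow> 'a oct \<Rightarrow> 'a oct" where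
  "oadd (Oct a u v b) (Oct a' u' v' b') = Oct (a + a') (vadd u u') (vadd v v') (b + b')"

fun osc :: "'a::field \<Rightarrow> 'a oct \<Rightarrow> 'a oct" where
  "osc c (Oct a u v b) = Oct (c * a) (vscale c u) (vscale c v) (c * b)"

definition ozero :: "'a::field oct" where
  "ozero = Oct 0 (V3 0 0 0) (V3 0 0 0) 0"

definition oone :: "'a::field oct" where
  "oone = Oct 1 (V3 0 0 0) (V3 0 0 0) 1"

lemma oct_cases3: obtains a u1 u2 u3 v1 v2 v3 b where "x = Oct a (V3 u1 u2 u3) (V3 v1 v2 v3) b"
  by (metis oct.exhaust vec3.exhaust)

lemma id_right_swap:
  fixes x a b :: "'a::field oct"
  shows "omult (omult x a) b =
    oadd (osc (-1) (omult (omult x b) a))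
     (oadd (osc (otr a) (omult x b))
      (oadd (osc (otr b) (omult x a))
        (osc (- (otr a * otr b - otr (omult a b))) x)))"
  by (cases x rule: oct_cases3; cases a rule: oct_cases3; cases b rule: oct_cases3)
     (simp add: algebra_simps)

lemma id_right_sq:
  fixes x a :: "'a::field oct"
  shows "omult (omult x a) a = oadd (osc (otr a) (omult x a)) (osc (- onorm a) x)"
  by (cases x rule: oct_cases3; cases a rule: oct_cases3)
     (simp add: algebra_simps)

lemma id_left:
  fixes x y a :: "'a::field oct"
  shows "omult x (omult y a) =
    oadd (osc (otr x) (omult y a))
    (oadd (osc (- (otr x * otr y - otr (omult x y))) a)
    (oadd (osc (- otr (omult x a)) y)
    (oadd (osc (otr y * otr (omult x a) - otr (omult (omult x a) y)) oone)
      (omult (omult x a) y))))"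
  by (cases x rule: oct_cases3; cases a rule: oct_cases3; cases y rule: oct_cases3)
     (simp add: algebra_simps oone_def)

lemma otr_comm: "otr (omult x y) = otr (omult y (x::'a::field oct))"
  by (cases x rule: oct_cases3; cases y rule: oct_cases3) (simp add: algebra_simps)

lemma omult_oone_left[simp]: "omult oone x = (x::'a::field oct)"
  by (cases x rule: oct_cases3) (simp add: oone_def)

lemma omult_oone_right[simp]: "omult x oone = (x::'a::field oct)"
  by (cases x rule: oct_cases3) (simp add: oone_def)

lemma omult_ozero_left[simp]: "omult ozero x = (ozero::'a::field oct)"
  by (cases x rule: oct_cases3) (simp add: ozero_def)

lemma omult_ozero_right[simp]: "omult x ozero = (ozero::'a::field oct)"
  by (cases x rule: oct_cases3) (simp add: ozero_def)

lemma omult_osc_left[simp]: "omult (osc c x) y = osc c (omult x (y::'a::field oct))"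
  by (cases x rule: oct_cases3; cases y rule: oct_cases3) (simp add: algebra_simps)

lemma omult_osc_right[simp]: "omult x (osc c y) = osc c (omult x (y::'a::field oct))"
  by (cases x rule: oct_cases3; cases y rule: oct_cases3) (simp add: algebra_simps)

lemma omult_oadd_left[simp]: "omult (oadd x y) z = oadd (omult x z) (omult y (z::'a::field oct))"
  by (cases x rule: oct_cases3; cases y rule: oct_cases3; cases z rule: oct_cases3) (simp add: algebra_simps)

lemma omult_oadd_right[simp]: "omult z (oadd x y) = oadd (omult z x) (omult z (y::'a::field oct))"
  by (cases x rule: oct_cases3; cases y rule: oct_cases3; cases z rule: oct_cases3) (simp add: algebra_simps)

lemma osc_osc[simp]: "osc c (osc d x) = osc (c * d) (x::'a::field oct)"
  by (cases x rule: oct_cases3) (simp add: algebra_simps)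

lemma osc_one[simp]: "osc 1 x = (x::'a::field oct)"
  by (cases x rule: oct_cases3) simp

lemma osc_oadd[simp]: "osc c (oadd x y) = oadd (osc c x) (osc c (y::'a::field oct))"
  by (cases x rule: oct_cases3; cases y rule: oct_cases3) (simp add: algebra_simps)

lemma otr_oadd[simp]: "otr (oadd x y) = otr x + otr (y::'a::field oct)"
  by (cases x rule: oct_cases3; cases y rule: oct_cases3) (simp add: algebra_simps)

lemma otr_osc[simp]: "otr (osc c x) = c * otr (x::'a::field oct)"
  by (cases x rule: oct_cases3) (simp add: algebra_simps)

lemma otr_oone[simp]: "otr (oone::'a::field oct) = 1 + 1"
  by (simp add: oone_def)

lemma otr_ozero[simp]: "otr (ozero::'a::field oct) = 0"
  by (simp add: ozero_def)

lemma onorm_ozero[simp]: "onorm (ozero::'a::field oct) = 0"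
  by (simp add: ozero_def)

lemma onorm_osc[simp]: "onorm (osc c x) = c * c * onorm (x::'a::field oct)"
  by (cases x rule: oct_cases3) (simp add: algebra_simps)

lemma onorm_oone[simp]: "onorm (oone::'a::field oct) = 1"
  by (simp add: oone_def)


definition lp :: "nat list \<Rightarrow> (nat \<Rightarrow> 'a::field oct) \<Rightarrow> 'a oct" where
  "lp is a = foldl omult oone (map a is)"

lemma foldl_omult_init: "foldl omult (omult oone x) xs = foldl omult x (xs::'a::field oct list)"
  by simp

lemma lp_left_prod: "is \<noteq> [] \<Longrightarrow> lp is a = left_prod is a"
  by (cases "is") (simp_all add: lp_def left_prod_def)

lemma lp_snoc[simp]: "lp (xs @ [x]) a = omult (lp xs a) (a x)"
  by (simp add: lp_def)

lemma lp_Nil[simp]: "lp [] a = oone"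
  by (simp add: lp_def)

lemma lp_single[simp]: "lp [x] a = a x"
  by (simp add: lp_def)

lemma gen_alg_mono: assumes "G \<subseteq> H" "f \<in> gen_alg G" shows "f \<in> gen_alg H"
  using assms(2,1) by (induction f rule: gen_alg.induct) (auto intro: gen_alg.intros)

lemma gen_alg_idem: assumes "G \<subseteq> gen_alg H" "f \<in> gen_alg G" shows "f \<in> gen_alg H"
  using assms(2,1) by (induction f rule: gen_alg.induct) (auto intro: gen_alg.intros)

lemma gen_alg_scale: "f \<in> gen_alg G \<Longrightarrow> (\<lambda>x. c * f x) \<in> gen_alg G"
  using gen_alg.mult[OF gen_alg.const[of c] ] by auto

lemma gen_alg_diff: "f \<in> gen_alg G \<Longrightarrow> g \<in> gen_alg G \<Longrightarrow> (\<lambda>x. f x - g x) \<in> gen_alg G"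
proof -
  assume f: "f \<in> gen_alg G" and g: "g \<in> gen_alg G"
  have "(\<lambda>x. (-1) * g x) \<in> gen_alg G" by (rule gen_alg_scale[OF g])
  from gen_alg.add[OF f this] show ?thesis by simp
qed

lemma gen_alg_neg: "f \<in> gen_alg G \<Longrightarrow> (\<lambda>x. - f x) \<in> gen_alg G"
  using gen_alg_scale[of f G "-1"] by simp

lemma tr_lp_in_A:
  assumes "sorted_wrt (<) is" "set is \<subseteq> {1..n}"
  shows "(\<lambda>a. otr (lp is a)) \<in> gen_alg (S_set n :: ((nat \<Rightarrow> 'a::field oct) \<Rightarrow> 'a) set)"
proof (cases "is = []")
  case True
  then show ?thesis by (simp add: gen_alg.const)
next
  case False
  then have "(\<lambda>a. otr (lp is a)) = (\<lambda>a::nat \<Rightarrow> 'a oct. otr (left_prod is a))"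
    by (simp add: lp_left_prod)
  moreover have "(\<lambda>a::nat \<Rightarrow> 'a oct. otr (left_prod is a)) \<in> S_set n"
    using assms False unfolding S_set_def by blast
  ultimately show ?thesis by (simp add: gen_alg.gen)
qed

lemma tr_letter_in_A:
  assumes "j \<in> {1..n}"
  shows "(\<lambda>a. otr (a j)) \<in> gen_alg (S_set n :: ((nat \<Rightarrow> 'a::field oct) \<Rightarrow> 'a) set)"
  using tr_lp_in_A[of "[j]" n] assms by simp

lemma norm_letter_in_A:
  assumes "j \<in> {1..n}"
  shows "(\<lambda>a. onorm (a j)) \<in> gen_alg (S_set n :: ((nat \<Rightarrow> 'a::field oct) \<Rightarrow> 'a) set)"
  using assms by (intro gen_alg.gen) (auto simp: S_set_def norm_funs_def)

lemma tr_pair_in_A: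
  assumes "j \<in> {1..n}" "l \<in> {1..n}" "j < l"
  shows "(\<lambda>a. otr (omult (a l) (a j))) \<in> gen_alg (S_set n :: ((nat \<Rightarrow> 'a::field oct) \<Rightarrow> 'a) set)"
proof -
  have "(\<lambda>a. otr (lp [j, l] a)) \<in> gen_alg (S_set n :: ((nat \<Rightarrow> 'a::field oct) \<Rightarrow> 'a) set)"
    using assms by (intro tr_lp_in_A) auto
  moreover have "(\<lambda>a. otr (lp [j, l] a)) = (\<lambda>a::nat \<Rightarrow> 'a oct. otr (omult (a l) (a j)))"
    by (rule ext) (simp add: lp_def otr_comm)
  ultimately show ?thesis by simp
qed

inductive_set Mset :: "nat \<Rightarrow> nat set \<Rightarrow> ((nat \<Rightarrow> 'a::field oct) \<Rightarrow> 'a oct) set"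
  for n :: nat and U :: "nat set" where
  base: "c \<in> gen_alg (S_set n) \<Longrightarrow> sorted_wrt (<) is \<Longrightarrow> set is \<subseteq> U \<Longrightarrow>
     (\<lambda>a. osc (c a) (lp is a)) \<in> Mset n U"
| add: "f \<in> Mset n U \<Longrightarrow> g \<in> Mset n U \<Longrightarrow> (\<lambda>a. oadd (f a) (g a)) \<in> Mset n U"

lemma M_basis: "sorted_wrt (<) is \<Longrightarrow> set is \<subseteq> U \<Longrightarrow> lp is \<in> Mset n U"
  using Mset.base[OF gen_alg.const[of 1]] by (simp add: fun_eq_iff)

lemma M_basis_sc: "c \<in> gen_alg (S_set n) \<Longrightarrow> sorted_wrt (<) is \<Longrightarrow> set is \<subseteq> U \<Longrightarrow>
     (\<lambda>a. osc (c a) (lp is a)) \<in> Mset n U"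
  by (rule Mset.base)

lemma M_scale: assumes "c \<in> gen_alg (S_set n)" "f \<in> Mset n U" shows "(\<lambda>a. osc (c a) (f a)) \<in> Mset n U"
  using assms(2,1)
proof (induction f rule: Mset.induct)
  case (base d "is")
  have "(\<lambda>x. c x * d x) \<in> gen_alg (S_set n)" using base gen_alg.mult by blast
  from Mset.base[OF this base(2,3)] show ?case by simp
next
  case (add f g)
  then show ?case by (simp add: Mset.add)
qed

lemma M_mono: "f \<in> Mset n U \<Longrightarrow> U \<subseteq> U' \<Longrightarrow> f \<in> Mset n U'"
  by (induction f rule: Mset.induct) (auto intro: Mset.intros)

lemma M_tr: "f \<in> Mset n U \<Longrightarrow> U \<subseteq> {1..n} \<Longrightarrow> (\<lambda>a. otr (f a)) \<in> gen_alg (S_set n)"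
proof (induction f rule: Mset.induct)
  case (base c "is")
  have "(\<lambda>a. otr (lp is a)) \<in> gen_alg (S_set n)" using base by (intro tr_lp_in_A) auto
  from gen_alg.mult[OF base(1) this] show ?case by simp
next
  case (add f g)
  then show ?case by (simp add: gen_alg.add)
qed

lemma M_append:
  "f \<in> Mset n U \<Longrightarrow> (\<forall>u\<in>U. u < l) \<Longrightarrow> (\<lambda>a. omult (f a) (a l)) \<in> Mset n (insert l U)"
proof (induction f rule: Mset.induct)
  case (base c "is")
  have "(\<lambda>a. osc (c a) (lp (is @ [l]) a)) \<in> Mset n (insert l U)"
    by (rule Mset.base) (use base in \<open>auto simp: sorted_wrt_append\<close>)
  then show ?case by simp
next
  case (add f g)
  then show ?case by (simp add: Mset.add)
qed

lemma M_neg: "f \<in> Mset n U \<Longrightarrow> (\<lambda>a. osc (-1) (f a)) \<in> Mset n U"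
  by (rule M_scale[OF gen_alg.const])

lemma lp_right_letter:
  assumes "sorted_wrt (<) is" "set is \<subseteq> {1..n}" "j \<in> {1..n}"
  shows "(\<lambda>a. omult (lp is a) (a j)) \<in> Mset n (insert j (set is))"
  using assms
proof (induction "is" arbitrary: j rule: rev_induct)
  case Nil
  have e: "(\<lambda>a::nat \<Rightarrow> 'a oct. omult (lp [] a) (a j)) = lp [j]" by (simp add: fun_eq_iff)
  show ?case unfolding e by (rule M_basis) auto
next
  case (snoc l bs)
  have sbs: "sorted_wrt (<) bs" and lt: "\<forall>x\<in>set bs. x < l"
    using snoc.prems by (auto simp: sorted_wrt_append)
  have l1: "l \<in> {1..n}" and bs1: "set bs \<subseteq> {1..n}" using snoc.prems by auto
  have Bbs: "lp bs \<in> Mset n (insert j (set (bs @ [l])))" by (rule M_basis[OF sbs]) auto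
  have Bis: "lp (bs @ [l]) \<in> Mset n (insert j (set (bs @ [l])))"
    by (rule M_basis[OF snoc.prems(1)]) auto
  consider "l < j" | "l = j" | "j < l" by arith
  then show ?case
  proof cases
    case 1
    have "sorted_wrt (<) (bs @ [l, j])" using snoc.prems 1 by (auto simp: sorted_wrt_append)
    moreover have e: "(\<lambda>a::nat \<Rightarrow> 'a oct. omult (lp (bs @ [l]) a) (a j)) = lp (bs @ [l, j])"
      by (simp add: fun_eq_iff lp_def)
    ultimately show ?thesis unfolding e by (intro M_basis) auto
  next
    case 2
    have e: "(\<lambda>a::nat \<Rightarrow> 'a oct. omult (lp (bs @ [l]) a) (a j)) =
      (\<lambda>a::nat \<Rightarrow> 'a oct. oadd (osc (otr (a l)) (lp (bs @ [l]) a)) (osc (- onorm (a l)) (lp bs a)))"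
      using 2 by (simp add: fun_eq_iff id_right_sq)
    have c1: "(\<lambda>a::nat \<Rightarrow> 'a oct. otr (a l)) \<in> gen_alg (S_set n :: ((nat \<Rightarrow> 'a oct) \<Rightarrow> 'a) set)"
      using l1 by (rule tr_letter_in_A)
    have c2: "(\<lambda>a::nat \<Rightarrow> 'a oct. - onorm (a l)) \<in> gen_alg (S_set n :: ((nat \<Rightarrow> 'a oct) \<Rightarrow> 'a) set)"
      using l1 by (intro gen_alg_neg norm_letter_in_A)
    show ?thesis unfolding e
      by (intro Mset.add M_scale[OF c1 Bis] M_scale[OF c2 Bbs])
  next
    case 3
    have IH: "(\<lambda>a::nat \<Rightarrow> 'a oct. omult (lp bs a) (a j)) \<in> Mset n (insert j (set bs))"
      using snoc.IH sbs bs1 snoc.prems(3) by blast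
    have "(\<lambda>a::nat \<Rightarrow> 'a oct. omult (omult (lp bs a) (a j)) (a l)) \<in> Mset n (insert l (insert j (set bs)))"
      by (rule M_append[OF IH]) (use lt 3 in auto)
    then have T1: "(\<lambda>a::nat \<Rightarrow> 'a oct. omult (omult (lp bs a) (a j)) (a l)) \<in> Mset n (insert j (set (bs @ [l])))"
      by (rule M_mono) auto
    have T2: "(\<lambda>a::nat \<Rightarrow> 'a oct. omult (lp bs a) (a j)) \<in> Mset n (insert j (set (bs @ [l])))"
      by (rule M_mono[OF IH]) auto
    have e: "(\<lambda>a::nat \<Rightarrow> 'a oct. omult (lp (bs @ [l]) a) (a j)) =
      (\<lambda>a::nat \<Rightarrow> 'a oct. oadd (osc (-1) (omult (omult (lp bs a) (a j)) (a l)))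
     (oadd (osc (otr (a l)) (omult (lp bs a) (a j)))
      (oadd (osc (otr (a j)) (lp (bs @ [l]) a))
        (osc (- (otr (a l) * otr (a j) - otr (omult (a l) (a j)))) (lp bs a)))))"
      by (simp add: fun_eq_iff id_right_swap[of _ "_ l"])
    have c1: "(\<lambda>a::nat \<Rightarrow> 'a oct. otr (a l)) \<in> gen_alg (S_set n :: ((nat \<Rightarrow> 'a oct) \<Rightarrow> 'a) set)"
      using l1 by (rule tr_letter_in_A)
    have c2: "(\<lambda>a::nat \<Rightarrow> 'a oct. otr (a j)) \<in> gen_alg (S_set n :: ((nat \<Rightarrow> 'a oct) \<Rightarrow> 'a) set)"
      using snoc.prems(3) by (rule tr_letter_in_A)
    have c3: "(\<lambda>a::nat \<Rightarrow> 'a oct. - (otr (a l) * otr (a j) - otr (omult (a l) (a j))))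
       \<in> gen_alg (S_set n :: ((nat \<Rightarrow> 'a oct) \<Rightarrow> 'a) set)"
      by (intro gen_alg_neg gen_alg_diff gen_alg.mult c1 c2 tr_pair_in_A l1 snoc.prems(3) 3)
    show ?thesis unfolding e
      by (intro Mset.add M_neg T1 M_scale[OF c1 T2] M_scale[OF c2 Bis] M_scale[OF c3 Bbs])
  qed
qed

lemma M_right:
  assumes "f \<in> Mset n U" "U \<subseteq> {1..n}" "j \<in> {1..n}"
  shows "(\<lambda>a. omult (f a) (a j)) \<in> Mset n (insert j U)"
  using assms
proof (induction f rule: Mset.induct)
  case (base c "is")
  have "(\<lambda>a. omult (lp is a) (a j)) \<in> Mset n (insert j (set is))"
    using base by (intro lp_right_letter) auto
  then have "(\<lambda>a. osc (c a) (omult (lp is a) (a j))) \<in> Mset n (insert j (set is))"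
    by (rule M_scale[OF base(1)])
  then show ?case using base by (auto elim: M_mono)
next
  case (add f g)
  then show ?case by (simp add: Mset.add)
qed

lemma M_right_full:
  assumes "f \<in> Mset n {1..n}" "j \<in> {1..n}"
  shows "(\<lambda>a. omult (f a) (a j)) \<in> Mset n {1..n}"
  using M_right[OF assms(1) _ assms(2)] assms(2) by (simp add: insert_absorb)

lemma M_mult_lp:
  assumes "sorted_wrt (<) js" "set js \<subseteq> {1..n}"
  shows "\<forall>f\<in>Mset n {1..n}. (\<lambda>a. omult (f a) (lp js a)) \<in> Mset n {1..n}"
  using assms
proof (induction js rule: rev_induct)
  case Nil
  then show ?case by simp
next
  case (snoc j ys)
  have sys: "sorted_wrt (<) ys" and ys1: "set ys \<subseteq> {1..n}" and j1: "j \<in> {1..n}"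
    using snoc.prems by (auto simp: sorted_wrt_append)
  note IH = snoc.IH[OF sys ys1]
  show ?case
  proof
    fix f :: "(nat \<Rightarrow> 'a oct) \<Rightarrow> 'a oct" assume f: "f \<in> Mset n {1..n}"
    have fa: "(\<lambda>a. omult (f a) (a j)) \<in> Mset n {1..n}" by (rule M_right_full[OF f j1])
    have fay: "(\<lambda>a. omult (omult (f a) (a j)) (lp ys a)) \<in> Mset n {1..n}"
      using bspec[OF IH fa] by simp
    have fy: "(\<lambda>a. omult (f a) (lp ys a)) \<in> Mset n {1..n}" using IH f by blast
    have By: "lp ys \<in> Mset n {1..n}" by (rule M_basis[OF sys ys1])
    have Bya: "lp (ys @ [j]) \<in> Mset n {1..n}" by (rule M_basis[OF snoc.prems])
    have Ba: "lp [j] \<in> Mset n {1..n}" by (rule M_basis) (use j1 in auto)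
    have B1: "lp [] \<in> Mset n {1..n}" by (rule M_basis) auto
    have e: "(\<lambda>a. omult (f a) (lp (ys @ [j]) a)) =
      (\<lambda>a. oadd (osc (otr (f a)) (lp (ys @ [j]) a))
    (oadd (osc (- (otr (f a) * otr (lp ys a) - otr (omult (f a) (lp ys a)))) (lp [j] a))
    (oadd (osc (- otr (omult (f a) (a j))) (lp ys a))
    (oadd (osc (otr (lp ys a) * otr (omult (f a) (a j)) - otr (omult (omult (f a) (a j)) (lp ys a))) (lp [] a))
      (omult (omult (f a) (a j)) (lp ys a))))))"
      by (simp add: fun_eq_iff id_left[of _ _ "_ j"])
    have trf: "(\<lambda>a. otr (f a)) \<in> gen_alg (S_set n)" by (rule M_tr[OF f]) auto
    have trfa: "(\<lambda>a. otr (omult (f a) (a j))) \<in> gen_alg (S_set n)" by (rule M_tr[OF fa]) auto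
    have trfy: "(\<lambda>a. otr (omult (f a) (lp ys a))) \<in> gen_alg (S_set n)" by (rule M_tr[OF fy]) auto
    have trfay: "(\<lambda>a. otr (omult (omult (f a) (a j)) (lp ys a))) \<in> gen_alg (S_set n)"
      by (rule M_tr[OF fay]) auto
    have trys: "(\<lambda>a. otr (lp ys a)) \<in> gen_alg (S_set n)" by (rule tr_lp_in_A[OF sys ys1])
    have c2: "(\<lambda>a. - (otr (f a) * otr (lp ys a) - otr (omult (f a) (lp ys a)))) \<in> gen_alg (S_set n)"
      by (intro gen_alg_neg gen_alg_diff gen_alg.mult trf trys trfy)
    have c3: "(\<lambda>a. - otr (omult (f a) (a j))) \<in> gen_alg (S_set n)"
      by (intro gen_alg_neg trfa)
    have c4: "(\<lambda>a. otr (lp ys a) * otr (omult (f a) (a j)) - otr (omult (omult (f a) (a j)) (lp ys a))) \<in> gen_alg (S_set n)"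
      by (intro gen_alg_diff gen_alg.mult trys trfa trfay)
    show "(\<lambda>a. omult (f a) (lp (ys @ [j]) a)) \<in> Mset n {1..n}"
      unfolding e
      by (intro Mset.add M_scale[OF trf Bya] M_scale[OF c2 Ba] M_scale[OF c3 By] M_scale[OF c4 B1] fay)
  qed
qed

lemma M_mult:
  assumes "g \<in> Mset n {1..n}" "f \<in> Mset n {1..n}"
  shows "(\<lambda>a. omult (f a) (g a)) \<in> Mset n {1..n}"
  using assms
proof (induction g rule: Mset.induct)
  case (base c "is")
  have "(\<lambda>a. omult (f a) (lp is a)) \<in> Mset n {1..n}"
    using M_mult_lp[OF base(2,3)] base(4) by blast
  from M_scale[OF base(1) this] show ?case by simp
next
  case (add g1 g2)
  then show ?case by (simp add: Mset.add)
qed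

lemma word_in_M:
  "letters w \<subseteq> {1..n} \<Longrightarrow> weval w \<in> Mset n {1..n}"
proof (induction w)
  case (Letter i)
  have e: "weval (Letter i) = lp [i]" by (simp add: fun_eq_iff)
  show ?case unfolding e by (rule M_basis) (use Letter in auto)
next
  case (Mul w1 w2)
  then have "(\<lambda>a::nat \<Rightarrow> 'a oct. omult (weval w1 a) (weval w2 a)) \<in> Mset n {1..n}"
    by (intro M_mult) auto
  then show ?case by (simp add: fun_eq_iff)
qed

lemma T_sub_S: "T_alg n \<subseteq> gen_alg (S_set n :: ((nat \<Rightarrow> 'a::field oct) \<Rightarrow> 'a) set)"
proof
  fix f :: "(nat \<Rightarrow> 'a oct) \<Rightarrow> 'a" assume "f \<in> T_alg n"
  then show "f \<in> gen_alg (S_set n)"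
    unfolding T_alg_def
  proof (rule gen_alg_idem[rotated])
    show "norm_funs n \<union> {\<lambda>a. otr (weval w a) |w. letters w \<subseteq> {1..n}} \<subseteq> gen_alg (S_set n :: ((nat \<Rightarrow> 'a oct) \<Rightarrow> 'a) set)"
    proof (intro Un_least subsetI)
      fix g :: "(nat \<Rightarrow> 'a oct) \<Rightarrow> 'a" assume "g \<in> norm_funs n"
      then show "g \<in> gen_alg (S_set n)" by (auto simp: S_set_def intro: gen_alg.gen)
    next
      fix g :: "(nat \<Rightarrow> 'a oct) \<Rightarrow> 'a" assume "g \<in> {\<lambda>a. otr (weval w a) |w. letters w \<subseteq> {1..n}}"
      then obtain w where g: "g = (\<lambda>a. otr (weval w a))" and w: "letters w \<subseteq> {1..n}" by blast
      show "g \<in> gen_alg (S_set n)" unfolding g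
        using M_tr[OF word_in_M[OF w]] by simp
    qed
  qed
qed

fun lw :: "nword \<Rightarrow> nat list \<Rightarrow> nword" where
  "lw w [] = w"
| "lw w (j # js) = lw (Mul w (Letter j)) js"

lemma weval_lw: "weval (lw w js) a = foldl omult (weval w a) (map a js)"
  by (induction js arbitrary: w) auto

lemma letters_lw: "letters (lw w js) = letters w \<union> set js"
  by (induction js arbitrary: w) auto

lemma S_sub_T: "S_set n \<subseteq> T_alg n"
proof
  fix g :: "(nat \<Rightarrow> 'a oct) \<Rightarrow> 'a" assume g: "g \<in> S_set n"
  show "g \<in> T_alg n"
  proof (cases "g \<in> norm_funs n")
    case True
    then show ?thesis unfolding T_alg_def by (auto intro: gen_alg.gen)
  next
    case False
    with g obtain "is" where g: "g = (\<lambda>a. otr (left_prod is a))" and ne: "is \<noteq> []"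
      and s: "set is \<subseteq> {1..n}" unfolding S_set_def by blast
    define w where "w = lw (Letter (hd is)) (tl is)"
    have "letters w = set is" using ne by (cases "is") (auto simp: w_def letters_lw)
    moreover have "g = (\<lambda>a. otr (weval w a))"
      by (simp add: g w_def weval_lw left_prod_def)
    ultimately show ?thesis using s unfolding T_alg_def by (auto intro!: gen_alg.gen)
  qed
qed

lemma part1: "gen_alg (S_set n :: ((nat \<Rightarrow> 'a::field oct) \<Rightarrow> 'a) set) = T_alg n"
proof
  show "gen_alg (S_set n) \<subseteq> T_alg n"
    using gen_alg_idem[of "S_set n" "norm_funs n \<union> {(\<lambda>a. otr (weval w a)) | w. letters w \<subseteq> {1..n}}"]
      S_sub_T unfolding T_alg_def by blast
  show "T_alg n \<subseteq> gen_alg (S_set n)" by (rule T_sub_S)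
qed


lemma digits_bound:
  fixes f :: "nat \<Rightarrow> nat"
  shows "(\<forall>j<N. f j < b) \<Longrightarrow> (\<Sum>j<N. f j * b ^ j) < b ^ N"
proof (induction N)
  case 0
  then show ?case by simp
next
  case (Suc N)
  then have IH: "(\<Sum>j<N. f j * b ^ j) < b ^ N" and fN: "f N + 1 \<le> b" by auto
  have "(\<Sum>j<Suc N. f j * b ^ j) = (\<Sum>j<N. f j * b ^ j) + f N * b ^ N" by simp
  also have "\<dots> < b ^ N + f N * b ^ N" using IH by simp
  also have "\<dots> = (f N + 1) * b ^ N" by simp
  also have "\<dots> \<le> b * b ^ N" using fN by (intro mult_right_mono) auto
  finally show ?case by simp
qed

lemma digits_unique:
  fixes f g :: "nat \<Rightarrow> nat"
  shows "(\<forall>j<N. f j < b) \<Longrightarrow> (\<forall>j<N. g j < b) \<Longrightarrow>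
    (\<Sum>j<N. f j * b ^ j) = (\<Sum>j<N. g j * b ^ j) \<Longrightarrow> j < N \<Longrightarrow> f j = g j"
proof (induction N arbitrary: j)
  case 0
  then show ?case by simp
next
  case (Suc N)
  define A where "A = (\<Sum>j<N. f j * b ^ j)"
  define B where "B = (\<Sum>j<N. g j * b ^ j)"
  have A: "A < b ^ N" unfolding A_def using Suc.prems by (intro digits_bound) auto
  have B: "B < b ^ N" unfolding B_def using Suc.prems by (intro digits_bound) auto
  have eq: "A + f N * b ^ N = B + g N * b ^ N" using Suc.prems(3) by (simp add: A_def B_def)
  have bpos: "b ^ N > 0" using A by linarith
  have "(A + f N * b ^ N) div b ^ N = f N" using A bpos by simp
  moreover have "(B + g N * b ^ N) div b ^ N = g N" using B bpos by simp
  ultimately have fg: "f N = g N" using eq by simp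
  with eq have AB: "A = B" by simp
  show ?case
  proof (cases "j = N")
    case True then show ?thesis using fg by simp
  next
    case False
    then have "j < N" using Suc.prems by simp
    then show ?thesis using Suc.IH[of j] Suc.prems AB by (auto simp: A_def B_def)
  qed
qed

definition wt :: "nat \<Rightarrow> nat \<Rightarrow> nat" where
  "wt n j = (n + 2) ^ (n + 1) + (n + 2) ^ j"

definition ws :: "nat \<Rightarrow> nat set \<Rightarrow> nat" where
  "ws n S = (\<Sum>j\<in>S. wt n j)"

definition Ach :: "nat \<Rightarrow> nat set \<Rightarrow> nat set" where
  "Ach n V = {(\<Sum>j\<in>V. D j * wt n j) | D. True}"

lemma sum_restrict_upto:
  fixes h :: "nat \<Rightarrow> nat"
  assumes "V \<subseteq> {0..n}"
  shows "(\<Sum>j\<in>V. h j) = (\<Sum>j<Suc n. if j \<in> V then h j else 0)"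
proof -
  have "(\<Sum>j<Suc n. if j \<in> V then h j else 0) = (\<Sum>j\<in>{..<Suc n} \<inter> V. h j)"
    by (rule sum.inter_restrict[symmetric]) auto
  also have "{..<Suc n} \<inter> V = V" using assms by auto
  finally show ?thesis by simp
qed

lemma UL:
  assumes V: "V \<subseteq> {0..n}" and S: "S \<subseteq> V"
    and eq: "(\<Sum>j\<in>V. D j * wt n j) = ws n S" and j: "j \<in> V"
  shows "D j = (if j \<in> S then 1 else 0)"
proof -
  define b where "b = n + 2"
  define M where "M = b ^ (n + 1)"
  have finV: "finite V" using V finite_subset by blast
  have finS: "finite S" using S finV finite_subset by blast
  define q where "q = (\<Sum>j\<in>V. D j)"
  define r where "r = (\<Sum>j\<in>V. D j * b ^ j)"
  define rS where "rS = (\<Sum>j\<in>S. b ^ j)"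
  have wtM: "wt n j = M + b ^ j" for j unfolding wt_def M_def b_def by (rule refl)
  have L: "(\<Sum>j\<in>V. D j * wt n j) = q * M + r"
  proof -
    have "(\<Sum>j\<in>V. D j * wt n j) = (\<Sum>j\<in>V. D j * M + D j * b ^ j)"
      by (simp only: wtM distrib_left)
    also have "\<dots> = (\<Sum>j\<in>V. D j * M) + r" by (simp only: sum.distrib r_def)
    also have "(\<Sum>j\<in>V. D j * M) = q * M" by (simp only: q_def sum_distrib_right)
    finally show ?thesis .
  qed
  have R: "ws n S = card S * M + rS"
  proof -
    have "ws n S = (\<Sum>j\<in>S. M + b ^ j)" by (simp only: ws_def wtM)
    also have "\<dots> = card S * M + rS" by (simp add: sum.distrib rS_def)
    finally show ?thesis .
  qed
  define D' where "D' j = (if j \<in> V then D j else 0)" for j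
  define E where "E j = (if j \<in> S then 1 else (0::nat))" for j
  have rS': "rS = (\<Sum>j<Suc n. E j * b ^ j)"
  proof -
    have "rS = (\<Sum>j\<in>S. b ^ j)" by (simp add: rS_def)
    also have "\<dots> = (\<Sum>j<Suc n. if j \<in> S then b ^ j else 0)"
      by (rule sum_restrict_upto) (use S V in auto)
    also have "\<dots> = (\<Sum>j<Suc n. E j * b ^ j)" by (intro sum.cong) (auto simp: E_def)
    finally show ?thesis .
  qed
  have r': "r = (\<Sum>j<Suc n. D' j * b ^ j)"
  proof -
    have "r = (\<Sum>j<Suc n. if j \<in> V then D j * b ^ j else 0)"
      unfolding r_def by (rule sum_restrict_upto[OF V])
    also have "\<dots> = (\<Sum>j<Suc n. D' j * b ^ j)" by (intro sum.cong) (auto simp: D'_def)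
    finally show ?thesis .
  qed
  have Eb: "\<forall>j<Suc n. E j < b" by (auto simp: E_def b_def)
  have rSM: "rS < M" unfolding rS' M_def using digits_bound[OF Eb] by simp
  have cardS: "card S \<le> n + 1"
  proof -
    have "card S \<le> card {0..n}" using S V by (intro card_mono) auto
    then show ?thesis by simp
  qed
  have "q * M \<le> q * M + r" by simp
  also have "\<dots> = card S * M + rS" using eq L R by simp
  also have "\<dots> < card S * M + M" using rSM by simp
  also have "\<dots> = (card S + 1) * M" by simp
  finally have "q < card S + 1" by (simp only: mult_less_cancel2)
  then have qb: "q < b" using cardS by (simp add: b_def)
  have Db: "\<forall>j<Suc n. D' j < b"
  proof (intro allI impI)
    fix i assume "i < Suc n"
    show "D' i < b"
    proof (cases "i \<in> V")
      case True
      then have "D i \<le> q" unfolding q_def by (intro member_le_sum finV) auto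
      then show ?thesis using qb True by (simp add: D'_def)
    next
      case False then show ?thesis by (simp add: D'_def b_def)
    qed
  qed
  have rM: "r < M" unfolding r' M_def using digits_bound[OF Db] by simp
  have e: "q * M + r = card S * M + rS" using eq L R by simp
  have "r = (q * M + r) mod M" using rM by simp
  also have "\<dots> = (card S * M + rS) mod M" using e by simp
  also have "\<dots> = rS" using rSM by simp
  finally have "r = rS" .
  then have sums: "(\<Sum>j<Suc n. D' j * b ^ j) = (\<Sum>j<Suc n. E j * b ^ j)" using r' rS' by simp
  have jn: "j < Suc n" using j V by auto
  have "D' j = E j" by (rule digits_unique[OF Db Eb sums jn])
  then show ?thesis using j by (simp add: D'_def E_def)
qed

lemma ws_indicator:
  assumes "finite V" "S \<subseteq> V"
  shows "(\<Sum>j\<in>V. (if j \<in> S then 1 else 0) * wt n j) = ws n S"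
proof -
  have "(\<Sum>j\<in>V. (if j \<in> S then 1 else 0) * wt n j) = (\<Sum>j\<in>V. if j \<in> S then wt n j else 0)"
    by (intro sum.cong) auto
  also have "\<dots> = (\<Sum>j\<in>V \<inter> S. wt n j)" by (rule sum.inter_restrict[symmetric]) (use assms in auto)
  also have "V \<inter> S = S" using assms by auto
  finally show ?thesis by (simp add: ws_def)
qed

lemma ws_in_Ach: "finite V \<Longrightarrow> S \<subseteq> V \<Longrightarrow> ws n S \<in> Ach n V"
  unfolding Ach_def
  by (intro CollectI exI[of _ "\<lambda>j. if j \<in> S then 1 else 0"]) (simp add: ws_indicator)

lemma Ach_add: "d1 \<in> Ach n V \<Longrightarrow> d2 \<in> Ach n V \<Longrightarrow> d1 + d2 \<in> Ach n V"
proof -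
  assume "d1 \<in> Ach n V" "d2 \<in> Ach n V"
  then obtain D1 D2 where d1: "d1 = (\<Sum>j\<in>V. D1 j * wt n j)" and d2: "d2 = (\<Sum>j\<in>V. D2 j * wt n j)"
    unfolding Ach_def by blast
  have "d1 + d2 = (\<Sum>j\<in>V. (D1 j + D2 j) * wt n j)"
    by (simp add: d1 d2 sum.distrib algebra_simps)
  then show ?thesis unfolding Ach_def by (intro CollectI exI[of _ "\<lambda>j. D1 j + D2 j"]) simp
qed

lemma Ach_zero: "0 \<in> Ach n V"
  unfolding Ach_def by (rule CollectI, rule exI[of _ "\<lambda>_. 0"]) simp

lemma Ach_split:
  assumes V: "V \<subseteq> {0..n}" and S: "S \<subseteq> V"
    and d1: "d1 \<in> Ach n V" and d2: "d2 \<in> Ach n V" and eq: "d1 + d2 = ws n S"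
  shows "\<exists>S1\<subseteq>S. d1 = ws n S1 \<and> d2 = ws n (S - S1)"
proof -
  have finV: "finite V" using V finite_subset by blast
  obtain D1 D2 where D1: "d1 = (\<Sum>j\<in>V. D1 j * wt n j)" and D2: "d2 = (\<Sum>j\<in>V. D2 j * wt n j)"
    using d1 d2 unfolding Ach_def by blast
  have "(\<Sum>j\<in>V. (D1 j + D2 j) * wt n j) = ws n S"
    using eq by (simp add: D1 D2 sum.distrib algebra_simps)
  then have U: "D1 j + D2 j = (if j \<in> S then 1 else 0)" if "j \<in> V" for j
    using UL[OF V S _ that, of "\<lambda>j. D1 j + D2 j"] by simp
  define S1 where "S1 = {j\<in>S. D1 j = 1}"
  have S1S: "S1 \<subseteq> S" by (auto simp: S1_def)
  have e1: "D1 j = (if j \<in> S1 then 1 else 0)" if "j \<in> V" for j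
    using U[OF that] by (auto simp: S1_def split: if_splits)
  have e2: "D2 j = (if j \<in> S - S1 then 1 else 0)" if "j \<in> V" for j
    using U[OF that] by (auto simp: S1_def split: if_splits)
  have "d1 = (\<Sum>j\<in>V. (if j \<in> S1 then 1 else 0) * wt n j)"
    unfolding D1 by (intro sum.cong) (auto simp: e1)
  also have "\<dots> = ws n S1" by (rule ws_indicator[OF finV]) (use S1S S in auto)
  finally have 1: "d1 = ws n S1" .
  have "d2 = (\<Sum>j\<in>V. (if j \<in> S - S1 then 1 else 0) * wt n j)"
    unfolding D2 by (intro sum.cong) (auto simp: e2)
  also have "\<dots> = ws n (S - S1)" by (rule ws_indicator[OF finV]) (use S in auto)
  finally have 2: "d2 = ws n (S - S1)" .
  show ?thesis using 1 2 S1S by blast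
qed

lemma ws_pos: "finite S \<Longrightarrow> S \<noteq> {} \<Longrightarrow> ws n S \<noteq> 0"
  by (simp add: ws_def wt_def)


lemma char2_one_one:
  assumes "CHAR('a::field) = 2" shows "(1::'a) + 1 = 0"
proof -
  have "(of_nat CHAR('a) :: 'a) = 0" by (rule of_nat_CHAR)
  then show ?thesis using assms by simp
qed

lemma alg_closed_infinite: "infinite (UNIV :: 'a::alg_closed_field set)"
proof
  assume fin: "finite (UNIV :: 'a set)"
  define Q :: "'a poly" where "Q = (\<Prod>a\<in>UNIV. [:-a, 1:])"
  define P :: "'a poly" where "P = Q + 1"
  have dQ: "degree Q = card (UNIV :: 'a set)"
    unfolding Q_def by (subst degree_prod_eq_sum_degree) auto
  have "card (UNIV :: 'a set) > 0" using fin by (simp add: card_gt_0_iff)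
  then have dQ0: "degree Q > 0" using dQ by simp
  then have "degree P = degree Q" unfolding P_def by (intro degree_add_eq_left) simp
  then have "degree P > 0" using dQ0 by simp
  then obtain x where x: "poly P x = 0" using alg_closed_imp_poly_has_root by blast
  have "poly Q x = (\<Prod>a\<in>UNIV. x - a)" unfolding Q_def by (simp add: poly_prod)
  also have "\<dots> = 0" using fin by (intro prod_zero) auto
  finally have "poly P x = 1" by (simp add: P_def)
  with x show False by simp
qed

lemma poly_eq_infinite:
  assumes "infinite (UNIV :: 'a::idom set)" "\<forall>t. poly p t = poly q (t::'a)"
  shows "p = q"
proof (rule ccontr)
  assume "p \<noteq> q"
  then have "p - q \<noteq> 0" by simp
  then have "finite {x. poly (p - q) x = 0}" by (rule poly_roots_finite)
  moreover have "{x. poly (p - q) x = 0} = UNIV" using assms(2) by auto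
  ultimately show False using assms(1) by simp
qed

lemma pair_inv:
  assumes "f \<in> gen_alg G" "\<forall>g\<in>G. g p = g q"
  shows "f p = f q"
  using assms by (induction f rule: gen_alg.induct) auto

lemma lp_zero: "j \<in> set is \<Longrightarrow> a j = ozero \<Longrightarrow> lp is a = ozero"
proof (induction "is" rule: rev_induct)
  case Nil
  then show ?case by simp
next
  case (snoc x xs)
  show ?case
  proof (cases "x = j")
    case True
    then show ?thesis using snoc.prems by simp
  next
    case False
    then have "j \<in> set xs" using snoc.prems by simp
    then have "lp xs a = ozero" using snoc.IH snoc.prems by simp
    then show ?thesis by simp
  qed
qed

lemma left_prod_zero:
  assumes "j \<in> set is" "a j = ozero" shows "left_prod is a = ozero"
proof -
  have "is \<noteq> []" using assms by auto
  then have "left_prod is a = lp is a" by (simp add: lp_left_prod)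
  also have "\<dots> = ozero" by (rule lp_zero[of j "is" a, OF assms])
  finally show ?thesis .
qed

lemma S_set_cases:
  assumes "g \<in> S_set n"
  obtains i where "1 \<le> i" "i \<le> n" "g = (\<lambda>a. onorm (a i))"
  | "is" where "is \<noteq> []" "sorted_wrt (<) is" "set is \<subseteq> {1..n}" "g = (\<lambda>a. otr (left_prod is a))"
proof -
  from assms have "g \<in> norm_funs n \<or> g \<in> {(\<lambda>a. otr (left_prod is a)) | is. is \<noteq> [] \<and> sorted_wrt (<) is \<and> set is \<subseteq> {1..n}}"
    unfolding S_set_def by (rule UnE) simp_all
  then show ?thesis
  proof
    assume "g \<in> norm_funs n"
    then obtain i where "g = (\<lambda>a. onorm (a i))" "1 \<le> i" "i \<le> n" unfolding norm_funs_def by (rule CollectE) (elim exE conjE, simp)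
    then show ?thesis using that(1) by simp
  next
    assume "g \<in> {(\<lambda>a. otr (left_prod is a)) | is. is \<noteq> [] \<and> sorted_wrt (<) is \<and> set is \<subseteq> {1..n}}"
    then obtain "is" where "g = (\<lambda>a. otr (left_prod is a))" "is \<noteq> []" "sorted_wrt (<) is" "set is \<subseteq> {1..n}"
      by (rule CollectE) (elim exE conjE, simp)
    then show ?thesis using that(2) by simp
  qed
qed

lemma strict_sorted_single:
  assumes "sorted_wrt (<) (J::nat list)" "J \<noteq> []" "\<forall>j\<in>set J. j = i"
  shows "J = [i]"
proof -
  have st: "set J = set [i]" using assms(2,3) by (cases J) auto
  have "sorted J" "distinct J" using assms(1) by (simp_all add: strict_sorted_iff)
  then show ?thesis using sorted_distinct_set_unique[of J "[i]"] st by simp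
qed

lemma NM_norm:
  fixes s :: "(nat \<Rightarrow> 'a::field oct) \<Rightarrow> 'a"
  assumes c2: "CHAR('a) = 2" and i: "1 \<le> i" "i \<le> n" and s: "s = (\<lambda>a. onorm (a i))"
  shows "s \<notin> gen_alg (S_set n - {s})"
proof
  assume mem: "s \<in> gen_alg (S_set n - {s})"
  define p :: "nat \<Rightarrow> 'a oct" where "p = (\<lambda>j. if j = i then oone else ozero)"
  define q :: "nat \<Rightarrow> 'a oct" where "q = (\<lambda>j. ozero)"
  have "\<forall>g\<in>S_set n - {s}. g p = g q"
  proof
    fix g assume g: "g \<in> S_set n - {s}"
    then have gS: "g \<in> S_set n" and gs: "g \<noteq> s" by auto
    from gS show "g p = g q"
    proof (cases rule: S_set_cases)
      case (1 j)
      then have "j \<noteq> i" using gs s by auto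
      then show ?thesis using 1 by (simp add: p_def q_def)
    next
      case (2 J)
      show ?thesis
      proof (cases "J = [i]")
        case True
        then show ?thesis using 2 char2_one_one[OF c2] by (simp add: p_def q_def left_prod_def)
      next
        case False
        then obtain j where j: "j \<in> set J" "j \<noteq> i"
          using strict_sorted_single[OF 2(2) 2(1)] by blast
        then have "left_prod J p = ozero" "left_prod J q = ozero"
          by (auto intro!: left_prod_zero[OF j(1)] simp: p_def q_def)
        then show ?thesis using 2 by simp
      qed
    qed
  qed
  from pair_inv[OF mem this] have "s p = s q" .
  then show False by (simp add: s p_def q_def)
qed

lemma NM_tr1:
  fixes s :: "(nat \<Rightarrow> 'a::field oct) \<Rightarrow> 'a"
  assumes s: "s = (\<lambda>a. otr (left_prod [i] a))"
  shows "s \<notin> gen_alg (S_set n - {s})"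
proof
  assume mem: "s \<in> gen_alg (S_set n - {s})"
  define e :: "'a oct" where "e = Oct 1 (V3 0 0 0) (V3 0 0 0) 0"
  define p :: "nat \<Rightarrow> 'a oct" where "p = (\<lambda>j. if j = i then e else ozero)"
  define q :: "nat \<Rightarrow> 'a oct" where "q = (\<lambda>j. ozero)"
  have "\<forall>g\<in>S_set n - {s}. g p = g q"
  proof
    fix g assume g: "g \<in> S_set n - {s}"
    then have gS: "g \<in> S_set n" and gs: "g \<noteq> s" by auto
    from gS show "g p = g q"
    proof (cases rule: S_set_cases)
      case (1 j)
      then show ?thesis by (simp add: p_def q_def e_def)
    next
      case (2 J)
      then have "J \<noteq> [i]" using gs s by auto
      then obtain j where j: "j \<in> set J" "j \<noteq> i"
        using strict_sorted_single[OF 2(2) 2(1)] by blast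
      then have "left_prod J p = ozero" "left_prod J q = ozero"
        by (auto intro!: left_prod_zero[OF j(1)] simp: p_def q_def)
      then show ?thesis using 2 by simp
    qed
  qed
  from pair_inv[OF mem this] have "s p = s q" .
  then show False by (simp add: s p_def q_def e_def left_prod_def)
qed


definition pt :: "nat \<Rightarrow> nat \<Rightarrow> nat \<Rightarrow> nat set \<Rightarrow> 'a::field \<Rightarrow> nat \<Rightarrow> 'a oct" where
  "pt n i1 i2 R t j = (if j = i1 then Oct 0 (V3 (t ^ wt n 0) 0 0) (V3 0 0 0) 0
     else if j = i2 then Oct 0 (V3 0 0 0) (V3 1 0 0) 0
     else if j \<in> R then osc (t ^ wt n j) oone else ozero)"

definition Hyp :: "nat set \<Rightarrow> nat set \<Rightarrow> bool" where
  "Hyp V S \<longleftrightarrow> S \<subseteq> V \<and> S \<noteq> {} \<and> (0 \<notin> S \<or> S = V)"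

definition Inv :: "nat \<Rightarrow> nat \<Rightarrow> nat \<Rightarrow> nat set \<Rightarrow> ((nat \<Rightarrow> 'a::field oct) \<Rightarrow> 'a) \<Rightarrow> bool" where
  "Inv n i1 i2 R f \<longleftrightarrow> (\<exists>p. (\<forall>t. f (pt n i1 i2 R t) = poly p t)
     \<and> (\<forall>d. coeff p d \<noteq> 0 \<longrightarrow> d \<in> Ach n (insert 0 R))
     \<and> (\<forall>S. Hyp (insert 0 R) S \<longrightarrow> coeff p (ws n S) = 0))"

lemma V_sub: "(R::nat set) \<subseteq> {1..(n::nat)} \<Longrightarrow> insert 0 R \<subseteq> {0..n}"
  by auto

lemma V_fin: "(R::nat set) \<subseteq> {1..(n::nat)} \<Longrightarrow> finite (insert 0 R)"
  by (rule finite_subset[OF V_sub]) auto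

lemma Inv_const:
  assumes R: "R \<subseteq> {1..n}"
  shows "Inv n i1 i2 R (\<lambda>_. c)"
  unfolding Inv_def
proof (intro exI[of _ "[:c:]"] conjI allI impI)
  fix t show "c = poly [:c:] t" by simp
next
  fix d assume "coeff [:c:] d \<noteq> 0"
  then have "d = 0" by (cases d) auto
  then show "d \<in> Ach n (insert 0 R)" by (simp add: Ach_zero)
next
  fix S assume H: "Hyp (insert 0 R) S"
  then have SV: "S \<subseteq> insert 0 R" and "S \<noteq> {}" unfolding Hyp_def by simp_all
  have "finite S" by (rule finite_subset[OF SV V_fin[OF R]])
  then have "ws n S \<noteq> 0" using \<open>S \<noteq> {}\<close> by (rule ws_pos)
  then show "coeff [:c:] (ws n S) = 0" by (cases "ws n S") auto
qed

lemma Inv_add: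
  assumes "Inv n i1 i2 R f" "Inv n i1 i2 R g"
  shows "Inv n i1 i2 R (\<lambda>x. f x + g x)"
proof -
  obtain p where p: "\<forall>t. f (pt n i1 i2 R t) = poly p t" "\<forall>d. coeff p d \<noteq> 0 \<longrightarrow> d \<in> Ach n (insert 0 R)"
    "\<forall>S. Hyp (insert 0 R) S \<longrightarrow> coeff p (ws n S) = 0" using assms(1) unfolding Inv_def by blast
  obtain q where q: "\<forall>t. g (pt n i1 i2 R t) = poly q t" "\<forall>d. coeff q d \<noteq> 0 \<longrightarrow> d \<in> Ach n (insert 0 R)"
    "\<forall>S. Hyp (insert 0 R) S \<longrightarrow> coeff q (ws n S) = 0" using assms(2) unfolding Inv_def by blast
  show ?thesis unfolding Inv_def
  proof (intro exI[of _ "p + q"] conjI allI impI)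
    fix t show "f (pt n i1 i2 R t) + g (pt n i1 i2 R t) = poly (p + q) t" using p q by simp
  next
    fix d assume "coeff (p + q) d \<noteq> 0"
    then have "coeff p d \<noteq> 0 \<or> coeff q d \<noteq> 0" by auto
    then show "d \<in> Ach n (insert 0 R)" using p q by blast
  next
    fix S assume "Hyp (insert 0 R) S"
    then show "coeff (p + q) (ws n S) = 0" using p q by simp
  qed
qed

lemma Hyp_split:
  assumes H: "Hyp V S" and S1: "S1 \<subseteq> S" "S1 \<noteq> {}" "S - S1 \<noteq> {}"
  shows "Hyp V S1 \<or> Hyp V (S - S1)"
proof -
  have SV: "S \<subseteq> V" using H unfolding Hyp_def by simp
  have a: "S1 \<subseteq> V" "S - S1 \<subseteq> V" using SV S1(1) by auto
  show ?thesis
  proof (cases "0 \<in> S1")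
    case True
    then have "0 \<notin> S - S1" by simp
    then show ?thesis using a S1 unfolding Hyp_def by simp
  next
    case False
    then show ?thesis using a S1 unfolding Hyp_def by simp
  qed
qed

lemma Inv_mult:
  assumes R: "R \<subseteq> {1..n}" and "Inv n i1 i2 R f" "Inv n i1 i2 R g"
  shows "Inv n i1 i2 R (\<lambda>x. f x * g x)"
proof -
  define V where "V = insert 0 R"
  have V: "V \<subseteq> {0..n}" unfolding V_def using R by auto
  obtain p where p: "\<forall>t. f (pt n i1 i2 R t) = poly p t" "\<forall>d. coeff p d \<noteq> 0 \<longrightarrow> d \<in> Ach n V"
    "\<forall>S. Hyp V S \<longrightarrow> coeff p (ws n S) = 0" using assms(2) unfolding Inv_def V_def by blast
  obtain q where q: "\<forall>t. g (pt n i1 i2 R t) = poly q t" "\<forall>d. coeff q d \<noteq> 0 \<longrightarrow> d \<in> Ach n V"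
    "\<forall>S. Hyp V S \<longrightarrow> coeff q (ws n S) = 0" using assms(3) unfolding Inv_def V_def by blast
  have ach: "d \<in> Ach n V" if "coeff (p * q) d \<noteq> 0" for d
  proof -
    have "(\<Sum>i\<le>d. coeff p i * coeff q (d - i)) \<noteq> 0" using that by (simp add: coeff_mult)
    then obtain i where i: "i \<in> {..d}" "coeff p i * coeff q (d - i) \<noteq> 0"
      by (meson sum.not_neutral_contains_not_neutral)
    then have "i \<in> Ach n V" "d - i \<in> Ach n V" using p(2) q(2) by auto
    then have "i + (d - i) \<in> Ach n V" by (rule Ach_add)
    then show ?thesis using i(1) by simp
  qed
  have hyp: "coeff (p * q) (ws n S) = 0" if H: "Hyp V S" for S
  proof -
    have SV: "S \<subseteq> V" using H unfolding Hyp_def by blast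
    have "coeff p i * coeff q (ws n S - i) = 0" if i: "i \<in> {..ws n S}" for i
    proof (rule ccontr)
      assume "coeff p i * coeff q (ws n S - i) \<noteq> 0"
      then have cp: "coeff p i \<noteq> 0" and cq: "coeff q (ws n S - i) \<noteq> 0" by auto
      have a1: "i \<in> Ach n V" using cp p(2) by blast
      have a2: "ws n S - i \<in> Ach n V" using cq q(2) by blast
      have "i + (ws n S - i) = ws n S" using i by simp
      from Ach_split[OF V SV a1 a2 this] obtain S1 where
        S1: "S1 \<subseteq> S" "i = ws n S1" "ws n S - i = ws n (S - S1)" by blast
      show False
      proof (cases "S1 = {}")
        case True
        then have "ws n S - i = ws n S" using S1 by simp
        then show False using cq q(3) H by simp
      next
        case False
        show False
        proof (cases "S - S1 = {}")
          case True
          then have "S1 = S" using S1 by blast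
          then show False using cp p(3) H S1 by simp
        next
          case False2: False
          from Hyp_split[OF H S1(1) False False2] show False
          proof
            assume "Hyp V S1" then show False using cp p(3) S1 by simp
          next
            assume "Hyp V (S - S1)" then show False using cq q(3) S1 by simp
          qed
        qed
      qed
    qed
    then have "(\<Sum>i\<le>ws n S. coeff p i * coeff q (ws n S - i)) = 0" by (intro sum.neutral) blast
    then show ?thesis by (simp only: coeff_mult)
  qed
  show ?thesis unfolding Inv_def V_def[symmetric]
  proof (intro exI[of _ "p * q"] conjI allI impI)
    fix t show "f (pt n i1 i2 R t) * g (pt n i1 i2 R t) = poly (p * q) t" using p q by simp
  next
    fix d assume "coeff (p * q) d \<noteq> 0" then show "d \<in> Ach n V" by (rule ach)
  next
    fix S assume "Hyp V S" then show "coeff (p * q) (ws n S) = 0" by (rule hyp)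
  qed
qed

lemma Inv_monom:
  assumes "d \<in> Ach n (insert 0 R)" "\<forall>S. Hyp (insert 0 R) S \<longrightarrow> ws n S \<noteq> d"
    "\<forall>t. f (pt n i1 i2 R t) = t ^ d"
  shows "Inv n i1 i2 R f"
  unfolding Inv_def
proof (intro exI[of _ "monom 1 d"] conjI allI impI)
  fix t show "f (pt n i1 i2 R t) = poly (monom 1 d) t" using assms(3) by (simp add: poly_monom)
next
  fix e assume "coeff (monom 1 d) e \<noteq> 0"
  then have "e = d" by (simp add: coeff_monom split: if_splits)
  then show "e \<in> Ach n (insert 0 R)" using assms(1) by simp
next
  fix S assume "Hyp (insert 0 R) S"
  then have "ws n S \<noteq> d" using assms(2) by blast
  then show "coeff (monom 1 d) (ws n S) = 0" by (simp add: coeff_monom)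
qed

lemma Inv_zero:
  assumes "\<forall>t. f (pt n i1 i2 R t) = 0"
  shows "Inv n i1 i2 R f"
  unfolding Inv_def
  by (intro exI[of _ "0"] conjI allI impI) (simp_all add: assms)


lemma pt_i1: "pt n i1 i2 R t i1 = Oct 0 (V3 (t ^ wt n 0) 0 0) (V3 0 0 0) 0"
  by (simp add: pt_def)

lemma pt_i2: "i1 \<noteq> i2 \<Longrightarrow> pt n i1 i2 R t i2 = Oct 0 (V3 0 0 0) (V3 1 0 0) 0"
  by (simp add: pt_def)

lemma pt_R: "j \<noteq> i1 \<Longrightarrow> j \<noteq> i2 \<Longrightarrow> j \<in> R \<Longrightarrow> pt n i1 i2 R t j = osc (t ^ wt n j) oone"
  by (simp add: pt_def)

lemma pt_out: "j \<notin> insert i1 (insert i2 R) \<Longrightarrow> pt n i1 i2 R t j = ozero"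
  by (simp add: pt_def)

lemma onorm_pt:
  assumes "i1 \<notin> R" "i2 \<notin> R"
  shows "onorm (pt n i1 i2 R t j) = (if j \<in> R then t ^ (2 * wt n j) else (0::'a::field))"
proof -
  consider "j = i1" | "j \<noteq> i1" "j = i2" | "j \<noteq> i1" "j \<noteq> i2" "j \<in> R" | "j \<notin> insert i1 (insert i2 R)"
    by blast
  then show ?thesis
  proof cases
    case 1 then show ?thesis using assms by (simp add: pt_def)
  next
    case 2 then show ?thesis using assms by (simp add: pt_def)
  next
    case 3 then show ?thesis by (simp add: pt_R mult_2 power_add)
  next
    case 4 then show ?thesis by (simp add: pt_out)
  qed
qed

lemma lp_pt_factor:
  assumes "i1 \<notin> R" "i2 \<notin> R"
  shows "lp J (pt n i1 i2 R t) = osc (prod_list (map (\<lambda>j. if j \<in> R then t ^ wt n j else (1::'a::field)) J))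
           (lp (filter (\<lambda>j. j \<notin> R) J) (pt n i1 i2 R t))"
proof (induction J rule: rev_induct)
  case Nil
  then show ?case by simp
next
  case (snoc x xs)
  show ?case
  proof (cases "x \<in> R")
    case True
    then have "x \<noteq> i1" "x \<noteq> i2" using assms by auto
    then show ?thesis using True snoc.IH by (simp add: pt_R mult.commute)
  next
    case False
    then show ?thesis using snoc.IH by simp
  qed
qed

lemma len2_cases:
  assumes "length xs \<le> 2"
  obtains "xs = []" | x where "xs = [x]" | x y where "xs = [x, y]"
  using assms by (cases xs rule: remdups_adj.cases) auto

lemma tr_lp_F:
  assumes c2: "(1::'a::field) + 1 = 0" and ne: "i1 \<noteq> i2" and dF: "distinct F" and sF: "set F \<subseteq> {i1, i2}"
  shows "otr (lp F (pt n i1 i2 R (t::'a))) = (if i1 \<in> set F \<and> i2 \<in> set F then t ^ wt n 0 else 0)"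
proof -
  have "length F = card (set F)" using dF by (simp add: distinct_card)
  also have "\<dots> \<le> card {i1, i2}" using sF by (intro card_mono) auto
  also have "\<dots> \<le> 2" by (simp add: card_insert_le_m1)
  finally have len: "length F \<le> 2" .
  note simps = pt_i1 pt_i2[OF ne] lp_def
  from len show ?thesis
  proof (cases rule: len2_cases)
    case 1 then show ?thesis using c2 by simp
  next
    case (2 x)
    then have "x = i1 \<or> x = i2" using sF by auto
    then show ?thesis using 2 ne by (auto simp: simps)
  next
    case (3 x y)
    then have "x \<noteq> y" "x = i1 \<or> x = i2" "y = i1 \<or> y = i2" using sF dF by auto
    then have "(x = i1 \<and> y = i2) \<or> (x = i2 \<and> y = i1)" by blast
    then show ?thesis using 3 ne by (auto simp: simps)
  qed
qed

lemma tr_lp_J: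
  assumes c2: "(1::'a::field) + 1 = 0" and R: "R \<subseteq> {1..n}" and nR: "i1 \<notin> R" "i2 \<notin> R" and ne: "i1 \<noteq> i2"
    and dJ: "distinct J" and sJ: "set J \<subseteq> insert i1 (insert i2 R)"
  shows "otr (lp J (pt n i1 i2 R (t::'a))) =
    (if i1 \<in> set J \<and> i2 \<in> set J then t ^ ws n (insert 0 (set J \<inter> R)) else 0)"
proof -
  define F where "F = filter (\<lambda>j. j \<notin> R) J"
  define P where "P = prod_list (map (\<lambda>j. if j \<in> R then t ^ wt n j else (1::'a)) J)"
  have e1: "otr (lp J (pt n i1 i2 R t)) = P * otr (lp F (pt n i1 i2 R t))"
    by (subst lp_pt_factor[OF nR]) (simp only: P_def F_def otr_osc)
  have dF: "distinct F" using dJ by (simp add: F_def)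
  have sF: "set F \<subseteq> {i1, i2}" using sJ by (auto simp: F_def)
  have m1: "i1 \<in> set F \<longleftrightarrow> i1 \<in> set J" using nR by (simp add: F_def)
  have m2: "i2 \<in> set F \<longleftrightarrow> i2 \<in> set J" using nR by (simp add: F_def)
  have "P = (\<Prod>j\<in>set J. if j \<in> R then t ^ wt n j else 1)"
    unfolding P_def by (rule prod.distinct_set_conv_list[symmetric, OF dJ])
  also have "\<dots> = (\<Prod>j\<in>set J \<inter> R. t ^ wt n j)"
    by (rule prod.inter_restrict[symmetric]) simp
  also have "\<dots> = t ^ (\<Sum>j\<in>set J \<inter> R. wt n j)" by (rule power_sum[symmetric])
  finally have P: "P = t ^ ws n (set J \<inter> R)" by (simp add: ws_def)
  have zn: "0 \<notin> set J \<inter> R" using R by auto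
  have ws_ins: "ws n (insert 0 (set J \<inter> R)) = wt n 0 + ws n (set J \<inter> R)"
    unfolding ws_def using zn by (simp add: sum.insert)
  show ?thesis
    unfolding e1 tr_lp_F[OF c2 ne dF sF] m1 m2 P ws_ins
    by (simp add: power_add mult.commute)
qed


lemma sum_delta2:
  assumes "finite V" "j \<in> V"
  shows "(\<Sum>i\<in>V. (if i = j then 2 else 0) * wt n i) = 2 * wt n j"
proof -
  have "(\<Sum>i\<in>V. (if i = j then 2 else 0) * wt n i) = (\<Sum>i\<in>V. if i = j then 2 * wt n j else 0)"
    by (intro sum.cong) auto
  also have "\<dots> = 2 * wt n j" using assms by simp
  finally show ?thesis .
qed

lemma gen_Inv:
  fixes g :: "(nat \<Rightarrow> 'a::field oct) \<Rightarrow> 'a"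
  assumes c2: "(1::'a) + 1 = 0"
    and is_def: "is = i1 # i2 # rest" and R_def: "R = set rest"
    and sis: "sorted_wrt (<) is" and sub: "set is \<subseteq> {1..n}"
    and gS: "g \<in> S_set n" and gs: "g \<noteq> (\<lambda>a. otr (left_prod is a))"
  shows "Inv n i1 i2 R g"
proof -
  define V where "V = insert 0 R"
  have R: "R \<subseteq> {1..n}" using sub by (simp add: is_def R_def)
  have V: "V \<subseteq> {0..n}" using R by (auto simp: V_def)
  have finV: "finite V" unfolding V_def by (rule V_fin[OF R])
  have i12: "i1 < i2" and i2R: "\<forall>j\<in>R. i2 < j" and i1R: "\<forall>j\<in>R. i1 < j"
    using sis by (auto simp: is_def R_def)
  have nR: "i1 \<notin> R" "i2 \<notin> R" using i2R i1R by auto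
  have ne: "i1 \<noteq> i2" using i12 by simp
  have setis: "set is = insert i1 (insert i2 R)" by (simp add: is_def R_def)
  have zR: "0 \<notin> R" using R by auto
  from gS show ?thesis
  proof (cases rule: S_set_cases)
    case (1 j)
    show ?thesis
    proof (cases "j \<in> R")
      case True
      have jV: "j \<in> V" using True by (simp add: V_def)
      show ?thesis
      proof (rule Inv_monom[where d = "2 * wt n j"])
        show "2 * wt n j \<in> Ach n (insert 0 R)"
          unfolding Ach_def V_def[symmetric]
          by (intro CollectI exI[of _ "\<lambda>i. if i = j then 2 else 0"]) (simp add: sum_delta2[OF finV jV])
        show "\<forall>S. Hyp (insert 0 R) S \<longrightarrow> ws n S \<noteq> 2 * wt n j"
        proof (intro allI impI notI)
          fix S assume H: "Hyp (insert 0 R) S" and e: "ws n S = 2 * wt n j"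
          have SV: "S \<subseteq> V" using H unfolding Hyp_def V_def by simp
          have "(\<Sum>i\<in>V. (if i = j then 2 else 0) * wt n i) = ws n S"
            using e sum_delta2[OF finV jV] by simp
          from UL[OF V SV this jV] show False by (simp split: if_splits)
        qed
        show "\<forall>t. g (pt n i1 i2 R t) = t ^ (2 * wt n j)"
          using 1 True by (simp add: onorm_pt[OF nR])
      qed
    next
      case False
      show ?thesis by (rule Inv_zero) (use 1 False in \<open>simp add: onorm_pt[OF nR]\<close>)
    qed
  next
    case (2 J)
    have dJ: "distinct J" using 2(2) by (simp add: strict_sorted_iff)
    have gJ: "g = (\<lambda>a. otr (lp J a))" using 2(1,4) by (simp add: lp_left_prod)
    show ?thesis
    proof (cases "set J \<subseteq> insert i1 (insert i2 R)")
      case sJ: True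
      note trJ = tr_lp_J[OF c2 R nR ne dJ sJ]
      show ?thesis
      proof (cases "i1 \<in> set J \<and> i2 \<in> set J")
        case both: True
        define S0 where "S0 = insert 0 (set J \<inter> R)"
        have S0V: "S0 \<subseteq> V" by (auto simp: S0_def V_def)
        show ?thesis
        proof (rule Inv_monom[where d = "ws n S0"])
          show "ws n S0 \<in> Ach n (insert 0 R)"
            unfolding V_def[symmetric] by (rule ws_in_Ach[OF finV S0V])
          show "\<forall>S. Hyp (insert 0 R) S \<longrightarrow> ws n S \<noteq> ws n S0"
          proof (intro allI impI notI)
            fix S assume H: "Hyp (insert 0 R) S" and e: "ws n S = ws n S0"
            have SV: "S \<subseteq> V" using H unfolding Hyp_def V_def by simp
            have eq: "(\<Sum>i\<in>V. (if i \<in> S0 then 1 else 0) * wt n i) = ws n S"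
              using ws_indicator[OF finV S0V] e by simp
            have "S = S0"
            proof
              show "S \<subseteq> S0"
              proof
                fix x assume "x \<in> S"
                then have "x \<in> V" using SV by blast
                from UL[OF V SV eq this] \<open>x \<in> S\<close> show "x \<in> S0" by (simp split: if_splits)
              qed
              show "S0 \<subseteq> S"
              proof
                fix x assume "x \<in> S0"
                then have "x \<in> V" using S0V by blast
                from UL[OF V SV eq this] \<open>x \<in> S0\<close> show "x \<in> S" by (simp split: if_splits)
              qed
            qed
            then have "0 \<in> S" by (simp add: S0_def)
            then have "S = V" using H unfolding Hyp_def V_def by simp
            then have eqR: "insert 0 (set J \<inter> R) = insert 0 R" using \<open>S = S0\<close> by (simp add: S0_def V_def)
            have "R \<subseteq> set J"
            proof
              fix x assume x: "x \<in> R"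
              then have "x \<in> insert 0 (set J \<inter> R)" unfolding eqR by simp
              moreover have "x \<noteq> 0" using zR x by (cases "x = 0") simp_all
              ultimately show "x \<in> set J" by simp
            qed
            then have "set J = set is" using sJ both setis by auto
            then have "J = is"
              using sorted_distinct_set_unique[of J "is"] 2(2) sis by (simp add: strict_sorted_iff)
            then show False using gs 2(4) by simp
          qed
          show "\<forall>t. g (pt n i1 i2 R t) = t ^ ws n S0"
            using both by (simp add: gJ trJ S0_def)
        qed
      next
        case False
        have "otr (lp J (pt n i1 i2 R t)) = 0" for t :: 'a
          by (subst trJ) (rule if_not_P[OF False])
        then show ?thesis by (intro Inv_zero) (simp add: gJ)
      qed
    next
      case False
      then obtain j where j: "j \<in> set J" "j \<notin> insert i1 (insert i2 R)" by blast
      have "lp J (pt n i1 i2 R t) = ozero" for t :: 'a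
        by (rule lp_zero[of j J, OF j(1)]) (rule pt_out[OF j(2)])
      then show ?thesis by (intro Inv_zero) (simp add: gJ)
    qed
  qed
qed

lemma NM_long:
  fixes s :: "(nat \<Rightarrow> 'a::alg_closed_field oct) \<Rightarrow> 'a"
  assumes c2: "CHAR('a) = 2"
    and is_def: "is = i1 # i2 # rest" and sis: "sorted_wrt (<) is" and sub: "set is \<subseteq> {1..n}"
    and s: "s = (\<lambda>a. otr (left_prod is a))"
  shows "s \<notin> gen_alg (S_set n - {s})"
proof
  assume mem: "s \<in> gen_alg (S_set n - {s})"
  define R where "R = set rest"
  define V where "V = insert 0 R"
  have c2': "(1::'a) + 1 = 0" by (rule char2_one_one[OF c2])
  have R: "R \<subseteq> {1..n}" using sub by (simp add: is_def R_def)
  have i12: "i1 < i2" and i2R: "\<forall>j\<in>R. i2 < j" and i1R: "\<forall>j\<in>R. i1 < j"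
    using sis by (auto simp: is_def R_def)
  have nR: "i1 \<notin> R" "i2 \<notin> R" using i2R i1R by auto
  have ne: "i1 \<noteq> i2" using i12 by simp
  have setis: "set is = insert i1 (insert i2 R)" by (simp add: is_def R_def)
  have dis: "distinct is" using sis by (simp add: strict_sorted_iff)
  have "Inv n i1 i2 R f" if "f \<in> gen_alg (S_set n - {s})" for f :: "(nat \<Rightarrow> 'a oct) \<Rightarrow> 'a"
    using that
  proof (induction f rule: gen_alg.induct)
    case (const c)
    then show ?case by (rule Inv_const[OF R])
  next
    case (gen g)
    show ?case by (rule gen_Inv[OF c2' is_def R_def sis sub]) (use gen s in auto)
  next
    case (add f g)
    show ?case by (rule Inv_add[OF add.IH])
  next
    case (mult f g)
    show ?case by (rule Inv_mult[OF R mult.IH])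
  qed
  from this[OF mem] obtain p where p: "\<forall>t. s (pt n i1 i2 R t) = poly p t"
    "\<forall>S. Hyp V S \<longrightarrow> coeff p (ws n S) = 0" unfolding Inv_def V_def by blast
  have val: "s (pt n i1 i2 R t) = t ^ ws n V" for t
  proof -
    have "s (pt n i1 i2 R t) = otr (lp is (pt n i1 i2 R t))" by (simp add: s is_def lp_left_prod)
    also have "\<dots> = t ^ ws n (insert 0 (set is \<inter> R))"
      by (subst tr_lp_J[OF c2' R nR ne dis]) (simp_all add: setis)
    also have "set is \<inter> R = R" using setis by blast
    finally show ?thesis by (simp add: V_def)
  qed
  have "\<forall>t. poly p t = poly (monom 1 (ws n V)) t" using p(1) val by (simp add: poly_monom)
  then have "p = monom 1 (ws n V)" by (rule poly_eq_infinite[OF alg_closed_infinite])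
  moreover have "Hyp V V" by (simp add: Hyp_def V_def)
  then have "coeff p (ws n V) = 0" using p(2) by blast
  ultimately show False by simp
qed

lemma NM:
  fixes s :: "(nat \<Rightarrow> 'a::alg_closed_field oct) \<Rightarrow> 'a"
  assumes c2: "CHAR('a) = 2" and sS: "s \<in> S_set n"
  shows "s \<notin> gen_alg (S_set n - {s})"
  using sS
proof (cases rule: S_set_cases)
  case (1 i)
  then show ?thesis by (intro NM_norm[OF c2]) auto
next
  case (2 "is")
  show ?thesis
  proof (cases "is")
    case Nil then show ?thesis using 2 by simp
  next
    case (Cons i1 r)
    show ?thesis
    proof (cases r)
      case Nil
      then show ?thesis using 2 Cons by (intro NM_tr1) simp
    next
      case (Cons i2 rest)
      show ?thesis
        by (rule NM_long[OF c2 _ 2(2) 2(3) 2(4)]) (simp add: \<open>is = i1 # r\<close> Cons)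
    qed
  qed
qed

theorem theorem5p2:
  fixes n :: nat
  assumes "n \<ge> 1"
    and "CHAR('a::alg_closed_field) = 2"
  shows "gen_alg (S_set n :: ((nat \<Rightarrow> 'a oct) \<Rightarrow> 'a) set) = T_alg n
     \<and> (\<forall>S'. S' \<subset> (S_set n :: ((nat \<Rightarrow> 'a oct) \<Rightarrow> 'a) set) \<longrightarrow> gen_alg S' \<noteq> T_alg n)"
proof (intro conjI allI impI)
  show "gen_alg (S_set n :: ((nat \<Rightarrow> 'a oct) \<Rightarrow> 'a) set) = T_alg n" by (rule part1)
next
  fix S' :: "((nat \<Rightarrow> 'a oct) \<Rightarrow> 'a) set"
  assume sub: "S' \<subset> S_set n"
  then obtain s where sS: "s \<in> S_set n" and sS': "s \<notin> S'" by blast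
  have nm: "s \<notin> gen_alg (S_set n - {s})" by (rule NM[OF assms(2) sS])
  have "S' \<subseteq> S_set n - {s}" using sub sS' by blast
  then have mono: "gen_alg S' \<subseteq> gen_alg (S_set n - {s})" using gen_alg_mono by blast
  have "s \<in> T_alg n" using part1 sS gen_alg.gen by blast
  then show "gen_alg S' \<noteq> T_alg n" using mono nm by blast
qed

end
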